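(* Let $(\mathcal{F}_\alpha)_{\alpha<\omega_1}$ be a transfinite family, $\mathcal{A}\subset[\mathbb{N}]^{<\infty}$ hereditary and $P\subset\mathbb{N}$ infinite. Suppose that for every $\alpha<\omega_1$ there is an infinite $N_\alpha\subset P$ with $\mathcal{F}_\alpha^{N_\alpha}\subset\mathcal{A}$. Then there is an infinite $L\subset P$ such that $[L]^{<\infty}\subset\mathcal{A}$.
   Context: An approximating family assigns to each countable limit ordinal $\alpha$ finite sets $A_n(\alpha)\subset[0,\alpha)$, $n\in\mathbb{N}$, with $A_n(\alpha)\subset A_{n+1}(\alpha)$ and $\lim_n\max A_n(\alpha)=\alpha$. The transfinite family it defines: $\mathcal{F}_0=\{\emptyset\}$; $\mathcal{F}_{\beta+1}=\{\{n\}\cup E:n\in\mathbb{N},E\in\mathcal{F}_\beta\}\cup\{\emptyset\}$; for limit $\alpha$, $\mathcal{F}_\alpha=\{\emptyset\}\cup\{E\ne\emptyset:E\in\bigcup_{\beta\in A_{\min E}(\alpha)}\mathcal{F}_\beta\}$. For $N=\{n_1<n_2<\dots\}$, $\mathcal{F}^N=\{\{n_i:i\in E\}:E\in\mathcal{F}\}$. $[L]^{<\infty}$ denotes the finite subsets of $L$; hereditary = closed under subsets. *)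

theory Defs
  imports Main "HOL-Library.Countable_Set"
begin

text \<open>Countable ordinals are modelled by a well-ordered type 'o that is order-isomorphic
  to omega_1: every proper initial segment is countable and the type itself is uncountable.\<close>

definition omega1_type :: "('o::wellorder) itself \<Rightarrow> bool" where
  "omega1_type _ \<longleftrightarrow> (\<forall>a::'o. countable {..<a}) \<and> \<not> countable (UNIV :: 'o set)"

definition ozero :: "'o::wellorder" where
  "ozero = (LEAST a. True)"

definition osucc :: "'o::wellorder \<Rightarrow> 'o" where
  "osucc b = (LEAST c. b < c)"

definition olimit :: "'o::wellorder \<Rightarrow> bool" where
  "olimit a \<longleftrightarrow> (\<exists>b. b < a) \<and> (\<forall>b<a. \<exists>c. b < c \<and> c < a)"

definition approximating_family :: "('o::wellorder \<Rightarrow> nat \<Rightarrow> 'o set) \<Rightarrow> bool" where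
  "approximating_family A \<longleftrightarrow>
     (\<forall>a. olimit a \<longrightarrow>
        (\<forall>n. finite (A a n) \<and> A a n \<subseteq> {..<a} \<and> A a n \<subseteq> A a (Suc n)) \<and>
        (\<forall>b<a. \<exists>n. \<exists>c\<in>A a n. b \<le> c))"

definition transfinite_family ::
    "('o::wellorder \<Rightarrow> nat \<Rightarrow> 'o set) \<Rightarrow> ('o \<Rightarrow> nat set set) \<Rightarrow> bool" where
  "transfinite_family A F \<longleftrightarrow>
     F ozero = {{}} \<and>
     (\<forall>b. F (osucc b) = {insert n E | n E. E \<in> F b} \<union> {{}}) \<and>
     (\<forall>a. olimit a \<longrightarrow>
        F a = {{}} \<union> {E. E \<noteq> {} \<and> E \<in> (\<Union>b\<in>A a (Min E). F b)})"

text \<open>F^N = { {n_i : i in E} : E in F } where n_0 < n_1 < ... enumerates N.\<close>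

definition spread :: "nat set set \<Rightarrow> nat set \<Rightarrow> nat set set" where
  "spread F N = (\<lambda>E. enumerate N ` E) ` F"

definition hereditary :: "nat set set \<Rightarrow> bool" where
  "hereditary \<A> \<longleftrightarrow> (\<forall>E\<in>\<A>. \<forall>D. D \<subseteq> E \<longrightarrow> D \<in> \<A>)"

end

theory Submission
  imports Defs
begin

lemma ozero_le: "(ozero::'o::wellorder) \<le> x"
  unfolding ozero_def by (rule Least_le) simp

lemma no_max:
  assumes "omega1_type TYPE('o::wellorder)"
  shows "\<exists>b. (a::'o) < b"
proof (rule ccontr)
  assume "\<not> ?thesis"
  then have eq: "UNIV = insert a {..<a}" by (auto simp: not_less order.not_eq_order_implies_strict)
  have "countable {..<a}" using assms unfolding omega1_type_def by blast
  then have "countable (insert a {..<a})" by simp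
  then have "countable (UNIV::'o set)" by (subst eq)
  then show False using assms unfolding omega1_type_def by blast
qed

lemma osucc_gt:
  assumes "omega1_type TYPE('o::wellorder)"
  shows "(b::'o) < osucc b"
proof -
  obtain c where "b < c" using no_max[OF assms] by blast
  then show ?thesis unfolding osucc_def by (rule LeastI)
qed

lemma osucc_le: "(b::'o::wellorder) < c \<Longrightarrow> osucc b \<le> c"
  unfolding osucc_def by (rule Least_le)

lemma ord_cases:
  fixes x :: "'o::wellorder"
  shows "x = ozero \<or> (\<exists>b. b < x \<and> x = osucc b) \<or> olimit x"
proof (cases "x = ozero")
  case False
  then have "ozero < x" using ozero_le[of x] order.order_iff_strict by blast
  then have ex: "\<exists>b. b < x" by blast
  show ?thesis
  proof (cases "olimit x")
    case False
    with ex obtain b where b: "b < x" "\<forall>c. b < c \<longrightarrow> \<not> c < x"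
      unfolding olimit_def by blast
    have "osucc b \<le> x" using b(1) by (rule osucc_le)
    moreover have "b < osucc b" unfolding osucc_def using b(1) by (rule LeastI)
    ultimately have "x = osucc b" using b(2) order.order_iff_strict by blast
    then show ?thesis using b by blast
  qed simp
qed simp

lemma countable_bounded:
  assumes "omega1_type TYPE('o::wellorder)" "countable (C::'o set)"
  shows "\<exists>g. \<forall>c\<in>C. c < g"
proof (rule ccontr)
  assume "\<not> ?thesis"
  then have "\<forall>g. \<exists>c\<in>C. g \<le> c" by (meson not_less)
  then have "UNIV \<subseteq> (\<Union>c\<in>C. insert c {..<c})" by (auto simp: order_le_less)
  moreover have "countable (\<Union>c\<in>C. insert c {..<c})"
    using assms unfolding omega1_type_def by (intro countable_UN) auto
  ultimately have "countable (UNIV::'o set)" by (rule countable_subset)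
  then show False using assms unfolding omega1_type_def by blast
qed


lemma tf_zero: "transfinite_family A F \<Longrightarrow> F ozero = {{}}"
  unfolding transfinite_family_def by (rule conjunct1)

lemma tf_succ: "transfinite_family A F \<Longrightarrow> F (osucc b) = {insert n E | n E. E \<in> F b} \<union> {{}}"
  unfolding transfinite_family_def
  by (drule conjunct2, drule conjunct1, erule allE, assumption)

lemma tf_lim: "transfinite_family A F \<Longrightarrow> olimit a \<Longrightarrow>
   F a = {{}} \<union> {E. E \<noteq> {} \<and> E \<in> (\<Union>b\<in>A a (Min E). F b)}"
  unfolding transfinite_family_def
  by (drule conjunct2, drule conjunct2, erule allE, erule mp)

lemma F_empty:
  assumes "transfinite_family A F"
  shows "{} \<in> F a"
proof -
  consider "a = ozero" | b where "a = osucc b" | "olimit a"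
    using ord_cases[of a] by blast
  then show ?thesis
  proof cases
    case 1 then show ?thesis using tf_zero[OF assms] by simp
  next
    case 2 then show ?thesis by (simp add: tf_succ[OF assms, of b])
  next
    case 3 then show ?thesis by (subst tf_lim[OF assms 3]) simp
  qed
qed

lemma A_mono:
  assumes "approximating_family A" "olimit a" "m \<le> m'"
  shows "A a m \<subseteq> A a m'"
proof -
  have "\<forall>n. A a n \<subseteq> A a (Suc n)"
    using assms(1,2) unfolding approximating_family_def by blast
  then show ?thesis using lift_Suc_mono_le[of "A a" m m'] assms(3) by blast
qed

lemma F_finite_shift:
  assumes om: "omega1_type TYPE('o::wellorder)"
    and ap: "approximating_family (A :: 'o \<Rightarrow> nat \<Rightarrow> 'o set)"
    and tf: "transfinite_family A F"
  shows "\<forall>E\<in>F a. finite E \<and> (\<forall>m. (\<lambda>i. i + m) ` E \<in> F a)"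
proof (induction a rule: less_induct)
  case (less a)
  consider "a = ozero" | b where "b < a" "a = osucc b" | "olimit a"
    using ord_cases[of a] by blast
  then show ?case
  proof cases
    case 1
    then show ?thesis using tf_zero[OF tf] by simp
  next
    case 2
    have Fs: "F a = {insert n E | n E. E \<in> F b} \<union> {{}}"
      using tf_succ[OF tf, of b] 2 by simp
    show ?thesis
    proof
      fix E assume "E \<in> F a"
      then have "E \<in> {insert n E | n E. E \<in> F b} \<union> {{}}" using Fs by simp
      then consider "E = {}" | n E' where "E = insert n E'" "E' \<in> F b" by blast
      then show "finite E \<and> (\<forall>m. (\<lambda>i. i + m) ` E \<in> F a)"
      proof cases
        case 1 then show ?thesis by (simp add: Fs)
      next
        case (2 n E')
        have ih: "finite E'" "\<And>m. (\<lambda>i. i + m) ` E' \<in> F b" using less.IH[OF \<open>b < a\<close>] 2 by auto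
        show ?thesis
        proof
          show "finite E" using ih 2 by simp
          show "\<forall>m. (\<lambda>i. i + m) ` E \<in> F a"
          proof
            fix m
            have eq: "(\<lambda>i. i + m) ` E = insert (n+m) ((\<lambda>i. i + m) ` E')" using 2 by simp
            have "insert (n+m) ((\<lambda>i. i + m) ` E') \<in> {insert n E | n E. E \<in> F b}"
              using ih(2)[of m] by blast
            then show "(\<lambda>i. i + m) ` E \<in> F a" unfolding eq Fs by simp
          qed
        qed
      qed
    qed
  next
    case 3
    note Fl = tf_lim[OF tf 3]
    have Alt: "\<And>n. A a n \<subseteq> {..<a}" using ap 3 unfolding approximating_family_def by blast
    show ?thesis
    proof
      fix E assume E: "E \<in> F a"
      show "finite E \<and> (\<forall>m. (\<lambda>i. i + m) ` E \<in> F a)"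
      proof (cases "E = {}")
        case True then show ?thesis by (subst Fl) simp
      next
        case False
        have "E \<in> {{}} \<union> {E. E \<noteq> {} \<and> E \<in> (\<Union>b\<in>A a (Min E). F b)}" using E Fl by simp
        then obtain c where c: "c \<in> A a (Min E)" "E \<in> F c" using False by blast
        have "c < a" using c Alt by blast
        note ih = less.IH[OF this, rule_format, OF c(2)]
        show ?thesis
        proof (intro conjI allI)
          show "finite E" using ih by simp
          fix m
          have "Min ((\<lambda>i. i + m) ` E) = Min E + m"
            using mono_Min_commute[of "\<lambda>i. i + m" E] ih False by (simp add: mono_def)
          then have "c \<in> A a (Min ((\<lambda>i. i + m) ` E))"
            using A_mono[OF ap 3, of "Min E" "Min E + m"] c by auto
          then have "(\<lambda>i. i + m) ` E \<in> {E. E \<noteq> {} \<and> E \<in> (\<Union>b\<in>A a (Min E). F b)}"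
            using ih False by blast
          then show "(\<lambda>i. i + m) ` E \<in> F a" by (subst Fl) blast
        qed
      qed
    qed
  qed
qed

definition SS :: "('o \<Rightarrow> nat set set) \<Rightarrow> nat set set \<Rightarrow> nat set \<Rightarrow> nat set \<Rightarrow> 'o set" where
  "SS F AA P t = {a. \<exists>N. N \<subseteq> P \<and> infinite N \<and> (\<forall>x\<in>N. \<forall>y\<in>t. y < x) \<and>
      (\<forall>E\<in>F a. t \<union> enumerate N ` E \<in> AA)}"

definition dropN :: "nat \<Rightarrow> nat set \<Rightarrow> nat set" where
  "dropN m N = ((\<lambda>S. S - {LEAST n. n \<in> S}) ^^ m) N"

lemma dropN_props:
  "infinite N \<Longrightarrow> dropN m N \<subseteq> N \<and> infinite (dropN m N) \<and> (\<forall>i. enumerate (dropN m N) i = enumerate N (i + m))"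
proof (induction m arbitrary: N)
  case 0 then show ?case by (simp add: dropN_def)
next
  case (Suc m)
  have eq: "dropN (Suc m) N = dropN m (N - {LEAST n. n \<in> N})"
    unfolding dropN_def by (simp add: funpow_Suc_right del: funpow.simps)
  have inf: "infinite (N - {LEAST n. n \<in> N})" using Suc.prems by simp
  show ?case using Suc.IH[OF inf] unfolding eq by (auto simp: enumerate_Suc)
qed

lemma SS_succ:
  assumes om: "omega1_type TYPE('o::wellorder)"
    and ap: "approximating_family (A :: 'o \<Rightarrow> nat \<Rightarrow> 'o set)"
    and tf: "transfinite_family A F"
    and "osucc b \<in> SS F AA P t"
  shows "\<exists>n. n \<in> P \<and> (\<forall>y\<in>t. y < n) \<and> b \<in> SS F AA P (insert n t)"
proof -
  obtain N where N: "N \<subseteq> P" "infinite N" "\<forall>x\<in>N. \<forall>y\<in>t. y < x"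
    "\<forall>E\<in>F (osucc b). t \<union> enumerate N ` E \<in> AA"
    using assms(4) unfolding SS_def by blast
  define n where "n = enumerate N 0"
  define N' where "N' = N - {n}"
  have nN: "n \<in> N" unfolding n_def using N(2) by (rule enumerate_in_set)
  have nmin: "\<forall>x\<in>N'. n < x" unfolding N'_def n_def enumerate_0
    by (metis DiffE Least_le insertCI order_le_less)
  have en: "\<And>i. enumerate N' i = enumerate N (Suc i)"
    unfolding N'_def n_def by (simp add: enumerate_Suc')
  have Fs: "F (osucc b) = {insert n E | n E. E \<in> F b} \<union> {{}}"
    using tf_succ[OF tf] by simp
  have "b \<in> SS F AA P (insert n t)"
    unfolding SS_def
  proof (intro CollectI exI conjI ballI)
    show "N' \<subseteq> P" "infinite N'" using N unfolding N'_def by auto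
    fix x y assume "x \<in> N'" "y \<in> insert n t"
    then show "y < x" using nmin N(3) unfolding N'_def by auto
  next
    fix E assume E: "E \<in> F b"
    have "(\<lambda>i. i + 1) ` E \<in> F b" using F_finite_shift[OF om ap tf] E by blast
    then have "insert 0 ((\<lambda>i. i + 1) ` E) \<in> F (osucc b)" using Fs by blast
    then have "t \<union> enumerate N ` insert 0 ((\<lambda>i. i + 1) ` E) \<in> AA" using N(4) by blast
    moreover have "t \<union> enumerate N ` insert 0 ((\<lambda>i. i + 1) ` E) = insert n t \<union> enumerate N' ` E"
      using en by (auto simp: n_def image_image)
    ultimately show "insert n t \<union> enumerate N' ` E \<in> AA" by simp
  qed
  then show ?thesis using nN N(1,3) by blast
qed

lemma SS_limit:
  assumes om: "omega1_type TYPE('o::wellorder)"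
    and ap: "approximating_family (A :: 'o \<Rightarrow> nat \<Rightarrow> 'o set)"
    and tf: "transfinite_family A F"
    and lim: "olimit a" and aS: "a \<in> SS F AA P t" and c: "c \<in> A a m"
  shows "c \<in> SS F AA P t"
proof -
  obtain N where N: "N \<subseteq> P" "infinite N" "\<forall>x\<in>N. \<forall>y\<in>t. y < x"
    "\<forall>E\<in>F a. t \<union> enumerate N ` E \<in> AA"
    using aS unfolding SS_def by blast
  note D = dropN_props[OF N(2), of m]
  have Fl: "F a = {{}} \<union> {E. E \<noteq> {} \<and> E \<in> (\<Union>b\<in>A a (Min E). F b)}"
    using tf_lim[OF tf lim] by simp
  show ?thesis unfolding SS_def
  proof (intro CollectI exI conjI ballI)
    show "dropN m N \<subseteq> P" "infinite (dropN m N)" using D N by auto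
    fix x y assume "x \<in> dropN m N" "y \<in> t" then show "y < x" using D N(3) by blast
  next
    fix E assume E: "E \<in> F c"
    show "t \<union> enumerate (dropN m N) ` E \<in> AA"
    proof (cases "E = {}")
      case True
      then show ?thesis using N(4) Fl by auto
    next
      case False
      have fin: "finite E" and sh: "(\<lambda>i. i + m) ` E \<in> F c"
        using F_finite_shift[OF om ap tf] E by blast+
      have "Min ((\<lambda>i. i + m) ` E) = Min E + m"
        using mono_Min_commute[of "\<lambda>i. i + m" E] fin False by (simp add: mono_def)
      then have "c \<in> A a (Min ((\<lambda>i. i + m) ` E))"
        using A_mono[OF ap lim, of m "Min E + m"] c by auto
      then have "(\<lambda>i. i + m) ` E \<in> F a" using sh False Fl by auto
      then have "t \<union> enumerate N ` ((\<lambda>i. i + m) ` E) \<in> AA" using N(4) by blast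
      moreover have "enumerate N ` ((\<lambda>i. i + m) ` E) = enumerate (dropN m N) ` E"
        using D by (auto simp: image_image)
      ultimately show ?thesis by simp
    qed
  qed
qed


lemma SS_descent:
  assumes om: "omega1_type TYPE('o::wellorder)"
    and ap: "approximating_family (A :: 'o \<Rightarrow> nat \<Rightarrow> 'o set)"
    and tf: "transfinite_family A F"
  shows "a \<in> SS F AA P t \<Longrightarrow> g < a \<Longrightarrow>
    \<exists>n b. n \<in> P \<and> (\<forall>y\<in>t. y < n) \<and> g \<le> b \<and> b \<in> SS F AA P (insert n t)"
proof (induction a rule: less_induct)
  case (less a)
  consider "a = ozero" | b where "b < a" "a = osucc b" | "olimit a"
    using ord_cases[of a] by blast
  then show ?case
  proof cases
    case 1
    then show ?thesis using less.prems(2) ozero_le[of g] by simp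
  next
    case 2
    then obtain n where n: "n \<in> P" "\<forall>y\<in>t. y < n" "b \<in> SS F AA P (insert n t)"
      using SS_succ[OF om ap tf] less.prems(1) by blast
    have "g \<le> b"
    proof (rule ccontr)
      assume "\<not> g \<le> b"
      then have "b < g" by simp
      then have "osucc b \<le> g" by (rule osucc_le)
      then show False using less.prems(2) 2 by simp
    qed
    then show ?thesis using n by blast
  next
    case 3
    obtain c' where c': "g < c'" "c' < a" using 3 less.prems(2) unfolding olimit_def by blast
    obtain m c where c: "c \<in> A a m" "c' \<le> c"
      using ap 3 c'(2) unfolding approximating_family_def by blast
    have "c < a" using ap 3 c(1) unfolding approximating_family_def by blast
    moreover have "c \<in> SS F AA P t" using SS_limit[OF om ap tf 3 less.prems(1) c(1)] .
    moreover have "g < c" using c' c by simp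
    ultimately show ?thesis using less.IH by blast
  qed
qed

definition Good :: "('o::wellorder \<Rightarrow> nat set set) \<Rightarrow> nat set set \<Rightarrow> nat set \<Rightarrow> nat set \<Rightarrow> bool" where
  "Good F AA P t \<longleftrightarrow> (\<forall>g. \<exists>a\<in>SS F AA P t. g \<le> a)"

lemma Good_step:
  assumes om: "omega1_type TYPE('o::wellorder)"
    and ap: "approximating_family (A :: 'o \<Rightarrow> nat \<Rightarrow> 'o set)"
    and tf: "transfinite_family A F"
    and G: "Good F AA P t"
  shows "\<exists>n. n \<in> P \<and> (\<forall>y\<in>t. y < n) \<and> Good F AA P (insert n t)"
proof (rule ccontr)
  assume H: "\<not> ?thesis"
  define V where "V = {n. n \<in> P \<and> (\<forall>y\<in>t. y < n)}"
  have "\<forall>n\<in>V. \<exists>g. \<forall>a\<in>SS F AA P (insert n t). a < g"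
    using H unfolding V_def Good_def by (auto simp: not_le)
  then obtain h where h: "\<And>n a. n \<in> V \<Longrightarrow> a \<in> SS F AA P (insert n t) \<Longrightarrow> a < h n"
    by metis
  have "countable (h ` V)" by simp
  then obtain g where g: "\<forall>c\<in>h ` V. c < g" using countable_bounded[OF om] by blast
  obtain g' where "g < g'" using no_max[OF om] by blast
  then obtain a where a: "a \<in> SS F AA P t" "g < a" using G unfolding Good_def
    by (meson order_less_le_trans)
  obtain n b where nb: "n \<in> P" "\<forall>y\<in>t. y < n" "g \<le> b" "b \<in> SS F AA P (insert n t)"
    using SS_descent[OF om ap tf a] by blast
  have "n \<in> V" using nb unfolding V_def by blast
  then have "b < g" using h[OF _ nb(4)] g by (meson image_eqI order_less_trans)
  then show False using nb(3) by simp
qed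

lemma Good_in:
  assumes tf: "transfinite_family A F" and G: "Good F AA P t"
  shows "t \<in> AA"
proof -
  obtain a where "a \<in> SS F AA P t" using G unfolding Good_def by blast
  then obtain N where "\<forall>E\<in>F a. t \<union> enumerate N ` E \<in> AA" unfolding SS_def by blast
  then show ?thesis using F_empty[OF tf, of a] by force
qed

theorem corollary4p5:
  fixes A :: "'o::wellorder \<Rightarrow> nat \<Rightarrow> 'o set"
    and F :: "'o \<Rightarrow> nat set set"
    and \<A> :: "nat set set"
    and P :: "nat set"
  assumes "omega1_type TYPE('o)"
    and "approximating_family A"
    and "transfinite_family A F"
    and "\<forall>E\<in>\<A>. finite E"
    and "hereditary \<A>"
    and "infinite P"
    and "\<forall>a. \<exists>N. N \<subseteq> P \<and> infinite N \<and> spread (F a) N \<subseteq> \<A>"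
  shows "\<exists>L. L \<subseteq> P \<and> infinite L \<and> {E. finite E \<and> E \<subseteq> L} \<subseteq> \<A>"
proof -
  note om = assms(1) and ap = assms(2) and tf = assms(3)
  have G0: "Good F \<A> P {}"
    unfolding Good_def
  proof
    fix g
    obtain N where "N \<subseteq> P" "infinite N" "spread (F g) N \<subseteq> \<A>" using assms(7) by blast
    then have "g \<in> SS F \<A> P {}" unfolding SS_def spread_def by auto
    then show "\<exists>a\<in>SS F \<A> P {}. g \<le> a" by blast
  qed
  define nx where "nx t = (SOME n. n \<in> P \<and> (\<forall>y\<in>t. y < n) \<and> Good F \<A> P (insert n t))" for t
  have nx: "nx t \<in> P \<and> (\<forall>y\<in>t. y < nx t) \<and> Good F \<A> P (insert (nx t) t)"
    if "Good F \<A> P t" for t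
    unfolding nx_def by (rule someI_ex) (rule Good_step[OF om ap tf that])
  define tt where "tt k = ((\<lambda>t. insert (nx t) t) ^^ k) {}" for k
  have tt_Suc: "tt (Suc k) = insert (nx (tt k)) (tt k)" for k unfolding tt_def by simp
  have Gk: "Good F \<A> P (tt k)" for k
    by (induction k) (auto simp: tt_Suc tt_def G0 nx)
  have fin: "finite (tt k) \<and> card (tt k) = k" for k
  proof (induction k)
    case 0 then show ?case by (simp add: tt_def)
  next
    case (Suc k)
    have "nx (tt k) \<notin> tt k" using nx[OF Gk[of k]] by blast
    then show ?case using Suc by (simp add: tt_Suc)
  qed
  have mono: "k \<le> k' \<Longrightarrow> tt k \<subseteq> tt k'" for k k'
    by (rule lift_Suc_mono_le[of tt]) (auto simp: tt_Suc)
  define L where "L = (\<Union>k. tt k)"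
  have sub: "\<And>k. tt k \<subseteq> P"
  proof -
    fix k show "tt k \<subseteq> P"
      using nx[OF Gk] by (induction k) (auto simp: tt_Suc, simp add: tt_def)
  qed
  have "L \<subseteq> P" unfolding L_def using sub by blast
  moreover have "infinite L"
  proof
    assume "finite L"
    have "tt (Suc (card L)) \<subseteq> L" unfolding L_def by blast
    then have "card (tt (Suc (card L))) \<le> card L" using \<open>finite L\<close> by (rule card_mono[rotated])
    then show False using fin by simp
  qed
  moreover have "{E. finite E \<and> E \<subseteq> L} \<subseteq> \<A>"
  proof
    fix E assume "E \<in> {E. finite E \<and> E \<subseteq> L}"
    then have E: "finite E" "E \<subseteq> (\<Union>k. tt k)" unfolding L_def by auto
    have "\<exists>k. E \<subseteq> tt k" using E
    proof (induction E rule: finite_induct)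
      case empty then show ?case by blast
    next
      case (insert x E)
      then obtain k where k: "E \<subseteq> tt k" by blast
      obtain k' where k': "x \<in> tt k'" using insert.prems by blast
      have "insert x E \<subseteq> tt (max k k')"
        using k k' mono[of k "max k k'"] mono[of k' "max k k'"] by auto
      then show ?case by blast
    qed
    then obtain k where "E \<subseteq> tt k" by blast
    moreover have "tt k \<in> \<A>" using Good_in[OF tf Gk] .
    ultimately show "E \<in> \<A>" using assms(5) unfolding hereditary_def by blast
  qed
  ultimately show ?thesis by blast
qed

end
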